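(* Let $U\subset\mathbb C$ be a bounded domain bounded by a smooth Jordan curve, and let $\chi=\chi(z)\frac{\partial}{\partial z}$ be a holomorphic vector field in a neighborhood of $\overline U$ with $\chi\ne0$ on $\partial U$, whose zeros $p_1,\dots,p_k$ in $U$ are all simple. Let $\omega=dz/\chi(z)$, $c_j=\operatorname{res}(\omega,p_j)\neq 0$, $\alpha_j=\mathrm i\,c_j/|c_j|$, and let $W_j\subset U$ be the canonical neighborhood of $p_j$ for the rotated vector field $\alpha_j\chi$. Let $p_i\ne p_j$ and let $\gamma_i\subset\overline{W_i}$, $\gamma_j\subset\overline{W_j}$ be closed trajectories of $\alpha_i\chi$ and $\alpha_j\chi$ respectively. Then $\gamma_i\cap\gamma_j=\emptyset$.
   Context: The rotated field $\alpha_j\chi$ has purely imaginary residue data at $p_j$ and near $p_j$ its real-time trajectories are closed of period $2\pi|c_j|$. The canonical neighborhood $W_j$ is the largest Jordan domain $W\subset U$ containing $p_j$, invariant under the flow of $\alpha_j\chi$, such that $W\setminus\{p_j\}$ is foliated by closed trajectories of $\alpha_j\chi$ of period $2\pi|c_j|$; its boundary $\partial W_j$ is itself a closed trajectory of $\alpha_j\chi$ of the same period, and $\partial W_j$ meets $\partial U$. *)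

theory Defs
  imports "HOL-Complex_Analysis.Complex_Analysis"
begin

definition smooth_jordan_curve :: "(real \<Rightarrow> complex) \<Rightarrow> bool" where
  "smooth_jordan_curve c \<longleftrightarrow>
     simple_path c \<and> pathfinish c = pathstart c \<and>
     (\<exists>C :: real \<Rightarrow> complex.
        (\<forall>t. C (t + 1) = C t) \<and> (\<forall>t\<in>{0..1}. c t = C t) \<and>
        (\<forall>n t. (((\<lambda>F s. vector_derivative F (at s)) ^^ n) C) differentiable (at t)) \<and>
        (\<forall>t. vector_derivative C (at t) \<noteq> 0))"

definition jordan_domain :: "complex set \<Rightarrow> bool" where
  "jordan_domain W \<longleftrightarrow>
     (\<exists>c. simple_path c \<and> pathfinish c = pathstart c \<and> W = inside (path_image c))"

definition is_solution ::
  "(complex \<Rightarrow> complex) \<Rightarrow> complex set \<Rightarrow> real set \<Rightarrow> (real \<Rightarrow> complex) \<Rightarrow> bool" where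
  "is_solution f V I g \<longleftrightarrow> is_interval I \<and> g ` I \<subseteq> V \<and>
     (\<forall>t\<in>I. (g has_vector_derivative f (g t)) (at t within I))"

definition periodic_solution ::
  "(complex \<Rightarrow> complex) \<Rightarrow> complex set \<Rightarrow> real \<Rightarrow> (real \<Rightarrow> complex) \<Rightarrow> bool" where
  "periodic_solution f V T g \<longleftrightarrow> is_solution f V UNIV g \<and> T > 0 \<and>
     (\<forall>t. g (t + T) = g t) \<and> (\<forall>s. 0 < s \<and> s < T \<longrightarrow> g s \<noteq> g 0)"

definition closed_trajectory ::
  "(complex \<Rightarrow> complex) \<Rightarrow> complex set \<Rightarrow> complex set \<Rightarrow> bool" where
  "closed_trajectory f V \<gamma> \<longleftrightarrow> (\<exists>g T. periodic_solution f V T g \<and> \<gamma> = range g)"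

definition flow_invariant ::
  "(complex \<Rightarrow> complex) \<Rightarrow> complex set \<Rightarrow> complex set \<Rightarrow> bool" where
  "flow_invariant f V W \<longleftrightarrow>
     (\<forall>I g. is_solution f V I g \<and> 0 \<in> I \<and> g 0 \<in> W \<longrightarrow> g ` I \<subseteq> W)"

definition periodic_nbhd ::
  "(complex \<Rightarrow> complex) \<Rightarrow> complex set \<Rightarrow> complex set \<Rightarrow> complex \<Rightarrow> real \<Rightarrow> complex set \<Rightarrow> bool" where
  "periodic_nbhd f V U p T W \<longleftrightarrow>
     jordan_domain W \<and> W \<subseteq> U \<and> p \<in> W \<and> flow_invariant f V W \<and>
     (\<forall>z \<in> W - {p}. \<exists>g. g 0 = z \<and> periodic_solution f V T g \<and> range g \<subseteq> W - {p})"

definition canonical_nbhd ::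
  "(complex \<Rightarrow> complex) \<Rightarrow> complex set \<Rightarrow> complex set \<Rightarrow> complex \<Rightarrow> real \<Rightarrow> complex set \<Rightarrow> bool" where
  "canonical_nbhd f V U p T W \<longleftrightarrow>
     periodic_nbhd f V U p T W \<and> (\<forall>W'. periodic_nbhd f V U p T W' \<longrightarrow> W' \<subseteq> W)"

definition rot_coeff :: "complex \<Rightarrow> complex" where
  "rot_coeff c = \<i> * c / complex_of_real (cmod c)"

end

theory Submission
  imports Defs
begin

lemma sol_at:
  assumes "is_solution F V UNIV g"
  shows "(g has_vector_derivative F (g t)) (at t)" "g t \<in> V"
  using assms unfolding is_solution_def by auto

lemma sol_cont: assumes "is_solution F V UNIV g" shows "continuous_on A g"
  using sol_at[OF assms] by (meson continuous_at_imp_continuous_on has_vector_derivative_continuous)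

lemma local_unique:
  assumes V: "open V" and holF: "F holomorphic_on V"
    and s1: "is_solution F V UNIV g1" and s2: "is_solution F V UNIV g2"
    and eq: "g1 t1 = g2 t1"
  shows "\<exists>\<tau>>0. \<forall>t. \<bar>t - t1\<bar> < \<tau> \<longrightarrow> g1 t = g2 t"
proof -
  define z where "z = g1 t1"
  have zV: "z \<in> V" using sol_at(2)[OF s1] z_def by auto
  obtain R where R: "R > 0" "cball z R \<subseteq> V" using V zV open_contains_cball by blast
  have "continuous_on (cball z R) (deriv F)"
    using holomorphic_deriv[OF holF V] R
    by (meson holomorphic_on_imp_continuous_on holomorphic_on_subset)
  then have "bounded (deriv F ` cball z R)" by (simp add: compact_continuous_image compact_imp_bounded)
  then obtain L where L: "L > 0" "\<And>w. w \<in> cball z R \<Longrightarrow> norm (deriv F w) \<le> L"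
    by (auto simp: bounded_pos)
  have lip: "norm (F x - F y) \<le> L * norm (x - y)" if "x \<in> cball z R" "y \<in> cball z R" for x y
  proof (rule field_differentiable_bound[of "cball z R" F "deriv F"])
    show "\<And>w. w \<in> cball z R \<Longrightarrow> (F has_field_derivative deriv F w) (at w within cball z R)"
      using R holF V by (meson holomorphic_derivI subsetD)
  qed (use that L in auto)
  have c1: "isCont g1 t1" "isCont g2 t1"
    using has_vector_derivative_continuous sol_at(1)[OF s1] sol_at(1)[OF s2] by blast+
  obtain d1 where d1: "d1 > 0" "\<And>t. dist t t1 < d1 \<Longrightarrow> dist (g1 t) (g1 t1) < R"
    using c1(1) R(1) unfolding continuous_at_eps_delta by blast
  obtain d2 where d2: "d2 > 0" "\<And>t. dist t t1 < d2 \<Longrightarrow> dist (g2 t) (g2 t1) < R"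
    using c1(2) R(1) unfolding continuous_at_eps_delta by blast
  define \<tau> where "\<tau> = min d1 d2"
  have inb: "g1 t \<in> cball z R \<and> g2 t \<in> cball z R" if "\<bar>t - t1\<bar> < \<tau>" for t
    using d1(2)[of t] d2(2)[of t] that eq unfolding \<tau>_def z_def
    by (auto simp: dist_real_def dist_commute)
  define h where "h t = (g1 t - g2 t) \<bullet> (g1 t - g2 t)" for t
  define h' where "h' t = 2 * ((g1 t - g2 t) \<bullet> (F (g1 t) - F (g2 t)))" for t
  have hd: "(h has_real_derivative h' t) (at t)" for t
  proof -
    have dd: "((\<lambda>t. g1 t - g2 t) has_vector_derivative (F (g1 t) - F (g2 t))) (at t)"
      using sol_at(1)[OF s1] sol_at(1)[OF s2] by (intro derivative_intros) auto
    have "(h has_derivative (\<lambda>x. (g1 t - g2 t) \<bullet> (x *\<^sub>R (F (g1 t) - F (g2 t))) + (x *\<^sub>R (F (g1 t) - F (g2 t))) \<bullet> (g1 t - g2 t))) (at t)"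
      unfolding h_def using dd unfolding has_vector_derivative_def
      by (intro has_derivative_inner) auto
    then show ?thesis unfolding has_field_derivative_def h'_def
      by (rule has_derivative_eq_rhs) (auto simp: inner_commute algebra_simps)
  qed
  have hb: "\<bar>h' t\<bar> \<le> 2 * L * h t" if "\<bar>t - t1\<bar> < \<tau>" for t
  proof -
    have "\<bar>(g1 t - g2 t) \<bullet> (F (g1 t) - F (g2 t))\<bar> \<le> norm (g1 t - g2 t) * norm (F (g1 t) - F (g2 t))"
      by (rule Cauchy_Schwarz_ineq2)
    also have "\<dots> \<le> norm (g1 t - g2 t) * (L * norm (g1 t - g2 t))"
      using lip inb[OF that] by (simp add: mult_left_mono)
    finally show ?thesis unfolding h'_def h_def by (simp add: power2_norm_eq_inner[symmetric] power2_eq_square algebra_simps)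
  qed
  have h0: "h t1 = 0" unfolding h_def using eq by simp
  have hnn: "h t \<ge> 0" for t unfolding h_def by simp
  have "g1 t = g2 t" if "\<bar>t - t1\<bar> < \<tau>" for t
  proof -
    have "h t \<le> 0"
    proof (cases "t1 \<le> t")
      case True
      define k where "k x = h x * exp (- 2 * L * x)" for x
      have "k t1 \<ge> k t"
      proof (rule DERIV_nonpos_imp_nonincreasing[OF True])
        fix x assume x: "t1 \<le> x" "x \<le> t"
        have "(k has_real_derivative (h' x * exp (- 2 * L * x) + h x * (exp (- 2 * L * x) * (- 2 * L)))) (at x)"
          unfolding k_def by (auto intro!: derivative_eq_intros hd)
        moreover have "h' x * exp (- 2 * L * x) + h x * (exp (- 2 * L * x) * (- 2 * L)) \<le> 0"
        proof -
          have "h' x \<le> 2 * L * h x" using hb[of x] x that by auto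
          then have "(h' x - 2 * L * h x) * exp (- 2 * L * x) \<le> 0"
            by (simp add: mult_nonpos_nonneg)
          then show ?thesis by (simp add: algebra_simps)
        qed
        ultimately show "\<exists>y. (k has_real_derivative y) (at x) \<and> y \<le> 0" by blast
      qed
      then have "h t * exp (- 2 * L * t) \<le> 0" unfolding k_def using h0 by simp
      then show ?thesis by (simp add: mult_le_0_iff)
    next
      case False
      define k where "k x = h x * exp (2 * L * x)" for x
      have "k t \<le> k t1"
      proof (rule DERIV_nonneg_imp_nondecreasing[of t t1 k])
        show "t \<le> t1" using False by simp
        fix x assume x: "t \<le> x" "x \<le> t1"
        have "(k has_real_derivative (h' x * exp (2 * L * x) + h x * (exp (2 * L * x) * (2 * L)))) (at x)"
          unfolding k_def by (auto intro!: derivative_eq_intros hd)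
        moreover have "h' x * exp (2 * L * x) + h x * (exp (2 * L * x) * (2 * L)) \<ge> 0"
        proof -
          have "- h' x \<le> 2 * L * h x" using hb[of x] x that by auto
          then have "(h' x + 2 * L * h x) * exp (2 * L * x) \<ge> 0"
            by simp
          then show ?thesis by (simp add: algebra_simps)
        qed
        ultimately show "\<exists>y. (k has_real_derivative y) (at x) \<and> y \<ge> 0" by blast
      qed
      then have "h t * exp (2 * L * t) \<le> 0" unfolding k_def using h0 by simp
      then show ?thesis by (simp add: mult_le_0_iff)
    qed
    then have "h t = 0" using hnn[of t] by simp
    then show ?thesis unfolding h_def by simp
  qed
  moreover have "\<tau> > 0" using d1 d2 \<tau>_def by simp
  ultimately show ?thesis by blast
qed

lemma sol_unique:
  assumes V: "open V" and holF: "F holomorphic_on V"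
    and s1: "is_solution F V UNIV g1" and s2: "is_solution F V UNIV g2"
    and eq: "g1 t1 = g2 t1"
  shows "g1 = g2"
proof -
  define S where "S = {t. g1 t = g2 t}"
  have "closed S" unfolding S_def
    by (intro closed_Collect_eq sol_cont[OF s1] sol_cont[OF s2])
  moreover have "open S"
    unfolding open_dist
  proof safe
    fix t assume "t \<in> S"
    then obtain \<tau> where "\<tau> > 0" "\<forall>s. \<bar>s - t\<bar> < \<tau> \<longrightarrow> g1 s = g2 s"
      using local_unique[OF V holF s1 s2] S_def by blast
    then show "\<exists>e>0. \<forall>y. dist y t < e \<longrightarrow> y \<in> S" unfolding S_def dist_real_def by blast
  qed
  moreover have "t1 \<in> S" using eq S_def by simp
  ultimately have "S = UNIV" using clopen[of S] by blast
  then show ?thesis unfolding S_def by auto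
qed

lemma sol_shift:
  assumes "is_solution F V UNIV g"
  shows "is_solution F V UNIV (\<lambda>u. g (u + a))"
proof -
  have "((\<lambda>u. g (u + a)) has_vector_derivative F (g (t + a))) (at t)" for t
  proof -
    have "((\<lambda>u. u + a) has_vector_derivative 1) (at t)" by (auto intro!: derivative_eq_intros)
    from vector_diff_chain_at[OF this sol_at(1)[OF assms, of "t + a"]]
    show ?thesis by (simp add: o_def)
  qed
  then show ?thesis using assms unfolding is_solution_def by auto
qed

lemma sol_reflect:
  assumes "is_solution F V UNIV g"
  shows "is_solution (\<lambda>z. - F z) V UNIV (\<lambda>u. g (a - u))"
proof -
  have "((\<lambda>u. g (a - u)) has_vector_derivative - F (g (a - t))) (at t)" for t
  proof -
    have "((\<lambda>u. a - u) has_vector_derivative -1) (at t)" by (auto intro!: derivative_eq_intros)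
    from vector_diff_chain_at[OF this sol_at(1)[OF assms, of "a - t"]]
    show ?thesis by (simp add: o_def)
  qed
  then show ?thesis using assms unfolding is_solution_def by auto
qed

locale persol =
  fixes F :: "complex \<Rightarrow> complex" and V :: "complex set" and T :: real and g :: "real \<Rightarrow> complex"
  assumes V: "open V" and holF: "F holomorphic_on V" and ps: "periodic_solution F V T g"
begin

lemma sol: "is_solution F V UNIV g" and Tpos: "T > 0" and per: "g (t + T) = g t"
  and minp: "0 < s \<Longrightarrow> s < T \<Longrightarrow> g s \<noteq> g 0"
  using ps unfolding periodic_solution_def by auto

lemma per_nat: "g (t + real n * T) = g t" "g (t - real n * T) = g t"
proof -
  show "g (t + real n * T) = g t" for t
  proof (induction n arbitrary: t)
    case (Suc n)
    have "g (t + real (Suc n) * T) = g ((t + real n * T) + T)" by (simp add: algebra_simps)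
    also have "\<dots> = g t" using per Suc by simp
    finally show ?case .
  qed simp
  then show "g (t - real n * T) = g t"
    by (metis diff_add_cancel)
qed

lemma per_int: "g (t + real_of_int m * T) = g t"
proof (cases "m \<ge> 0")
  case True
  then show ?thesis using per_nat(1)[of t "nat m"] by simp
next
  case False
  then show ?thesis using per_nat(2)[of t "nat (- m)"] by (simp add: algebra_simps)
qed

lemma inj: assumes "s0 < u" "u < s0 + T" shows "g u \<noteq> g s0"
proof
  assume eq: "g u = g s0"
  have "(\<lambda>v. g (v + s0)) = (\<lambda>v. g (v + u))"
    by (rule sol_unique[OF V holF sol_shift[OF sol] sol_shift[OF sol], of 0]) (use eq in simp)
  then have "g (-s0 + s0) = g (-s0 + u)" by (rule fun_cong)
  then show False using minp[of "u - s0"] assms by simp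
qed

lemma nonzero: "F (g t) \<noteq> 0"
proof
  assume "F (g t) = 0"
  have "is_solution F V UNIV (\<lambda>_. g t)"
    unfolding is_solution_def using sol_at(2)[OF sol] \<open>F (g t) = 0\<close> by auto
  from sol_unique[OF V holF sol this, of t] have "g = (\<lambda>_. g t)" by simp
  then have "g (T/2) = g t" "g 0 = g t" by (auto dest: fun_cong)
  then have "g (T/2) = g 0" by simp
  then show False using minp[of "T/2"] Tpos by simp
qed

lemma near:
  assumes "\<epsilon> > 0"
  shows "\<exists>\<delta>>0. \<forall>u. norm (g u - g s0) < \<delta> \<longrightarrow> (\<exists>m::int. \<bar>u - s0 - m * T\<bar> \<le> \<epsilon>)"
proof -
  define K where "K = g ` {s0 + \<epsilon> .. s0 + T - \<epsilon>}"
  have "compact K" unfolding K_def by (intro compact_continuous_image sol_cont[OF sol]) auto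
  moreover have "g s0 \<notin> K"
  proof
    assume "g s0 \<in> K"
    then obtain x where x: "x \<in> {s0 + \<epsilon> .. s0 + T - \<epsilon>}" "g s0 = g x" unfolding K_def by auto
    then have "s0 < x" "x < s0 + T" using assms by auto
    then show False using inj[of s0 x] x(2) by simp
  qed
  ultimately obtain \<delta> where \<delta>: "\<delta> > 0" "ball (g s0) \<delta> \<inter> K = {}"
  proof -
    have "open (- K)" using \<open>compact K\<close> by (simp add: compact_imp_closed open_Compl)
    then obtain \<delta> where "\<delta> > 0" "ball (g s0) \<delta> \<subseteq> - K" using \<open>g s0 \<notin> K\<close> open_contains_ball by blast
    then show ?thesis using that by blast
  qed
  have "\<exists>m::int. \<bar>u - s0 - m * T\<bar> \<le> \<epsilon>" if "norm (g u - g s0) < \<delta>" for u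
  proof -
    define m where "m = floor ((u - s0 + \<epsilon>) / T)"
    define u' where "u' = u - m * T"
    have "m \<le> (u - s0 + \<epsilon>) / T" "(u - s0 + \<epsilon>) / T < m + 1" unfolding m_def by linarith+
    then have lo: "s0 - \<epsilon> \<le> u'" and hi: "u' < s0 - \<epsilon> + T" unfolding u'_def using Tpos
      by (auto simp: field_simps)
    have gu: "g u' = g u" unfolding u'_def using per_int[of u "-m"] by simp
    show ?thesis
    proof (cases "u' \<le> s0 + \<epsilon>")
      case True then show ?thesis using lo unfolding u'_def by (intro exI[of _ m]) auto
    next
      case False
      then have "g u' \<in> K" unfolding K_def using hi by auto
      moreover have "g u' \<in> ball (g s0) \<delta>" using gu that by (simp add: dist_norm norm_minus_commute)
      ultimately show ?thesis using \<delta> by blast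
    qed
  qed
  then show ?thesis using \<delta> by blast
qed

definition loop where "loop x = g (T * x)"

lemma loop_path: "path loop"
  unfolding loop_def path_def by (intro continuous_on_compose2[OF sol_cont[OF sol, of UNIV]] continuous_intros) auto

lemma loop_image: "path_image loop = range g"
proof
  show "path_image loop \<subseteq> range g" unfolding path_image_def loop_def by auto
  show "range g \<subseteq> path_image loop"
  proof
    fix z assume "z \<in> range g"
    then obtain u where u: "z = g u" by auto
    define m where "m = floor (u / T)"
    define x where "x = (u - m * T) / T"
    have "m \<le> u / T" "u / T < m + 1" unfolding m_def by linarith+
    then have "0 \<le> x" "x \<le> 1" unfolding x_def using Tpos by (auto simp: field_simps)
    moreover have "loop x = z" unfolding loop_def x_def u using Tpos per_int[of u "-m"] by simp
    ultimately show "z \<in> path_image loop" unfolding path_image_def by auto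
  qed
qed

lemma loop_closed: "pathfinish loop = pathstart loop"
  unfolding pathfinish_def pathstart_def loop_def using per[of 0] by simp

lemma loop_simple: "simple_path loop"
  unfolding simple_path_def
proof (intro conjI loop_path)
  have *: "x = y" if "x \<in> {0..1}" "y \<in> {0..1}" "loop x = loop y" "x < y" "\<not> (x = 0 \<and> y = 1)" for x y
  proof -
    have "y - x < 1" using that by auto
    then have "T * (y - x) < T * 1" using Tpos by (intro mult_strict_left_mono) auto
    then have "g (T * y) \<noteq> g (T * x)" using inj[of "T * x" "T * y"] that Tpos
      by (auto simp: algebra_simps)
    then show ?thesis using that unfolding loop_def by simp
  qed
  show "loop_free loop" unfolding loop_free_def
  proof (intro ballI impI)
    fix x y assume xy: "x \<in> {0..1}" "y \<in> {0..1}" "loop x = loop y"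
    show "x = y \<or> x = 0 \<and> y = 1 \<or> x = 1 \<and> y = 0"
    proof (cases x y rule: linorder_cases)
      case less then show ?thesis using *[of x y] xy by blast
    next
      case greater then show ?thesis using *[of y x] xy by auto
    qed simp
  qed
qed

end

definition seg :: "(real \<Rightarrow> complex) \<Rightarrow> real \<Rightarrow> real \<Rightarrow> real \<Rightarrow> complex" where
  "seg g x y = (\<lambda>u. g (x + u * (y - x)))"

lemma seg_deriv:
  assumes "is_solution F V UNIV g"
  shows "(seg g x y has_vector_derivative (y - x) * F (g (x + u * (y - x)))) (at u)"
proof -
  have "((\<lambda>u. x + u * (y - x)) has_vector_derivative (y - x)) (at u)"
    by (auto intro!: derivative_eq_intros)
  from vector_diff_chain_at[OF this sol_at(1)[OF assms, of "x + u * (y - x)"]]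
  show ?thesis unfolding seg_def by (simp add: o_def scaleR_conv_of_real)
qed

lemma seg_valid:
  assumes s: "is_solution F V UNIV g" and V: "open V" and holF: "F holomorphic_on V"
  shows "valid_path (seg g x y)"
proof -
  have cg: "continuous_on UNIV g" by (rule sol_cont[OF s])
  have cF: "continuous_on V F" using holF holomorphic_on_imp_continuous_on by blast
  have gV: "g ` UNIV \<subseteq> V" using s unfolding is_solution_def by auto
  have cFg: "continuous_on UNIV (\<lambda>t. F (g t))"
    using continuous_on_compose2[OF cF cg gV] .
  have caff: "continuous_on UNIV (\<lambda>u. x + u * (y - x))" by (intro continuous_intros)
  have "continuous_on UNIV (\<lambda>u. F (g (x + u * (y - x))))"
    using continuous_on_compose2[OF cFg caff] by simp
  then have c2: "continuous_on {0..1} (\<lambda>u. (complex_of_real y - complex_of_real x) * F (g (x + u * (y - x))))"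
    by (intro continuous_intros) (auto intro: continuous_on_subset)
  have vd: "vector_derivative (seg g x y) (at u) = (complex_of_real y - complex_of_real x) * F (g (x + u * (y - x)))" for u
    by (rule vector_derivative_at[OF seg_deriv[OF s]])
  have "seg g x y C1_differentiable_on {0..1}"
    unfolding C1_differentiable_on_eq
  proof
    show "\<forall>u\<in>{0..1}. seg g x y differentiable at u"
      using seg_deriv[OF s] differentiableI_vector by blast
    show "continuous_on {0..1} (\<lambda>u. vector_derivative (seg g x y) (at u))"
      unfolding vd by (rule c2)
  qed
  then show ?thesis unfolding valid_path_def by (rule C1_differentiable_imp_piecewise)
qed

lemma seg_integral:
  assumes s: "is_solution (\<lambda>z. a * chi z) V UNIV g" and nz: "\<And>t. chi (g t) \<noteq> 0"
  shows "((\<lambda>w. 1 / chi w) has_contour_integral (a * (y - x))) (seg g x y)"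
proof -
  have vd: "vector_derivative (seg g x y) (at u within {0..1}) = (y - x) * (a * chi (seg g x y u))"
    if "u \<in> {0..1}" for u
  proof -
    have "(seg g x y has_vector_derivative (y - x) * (a * chi (seg g x y u))) (at u within cbox 0 1)"
      using has_vector_derivative_at_within[OF seg_deriv[OF s, of x y u]] unfolding seg_def by simp
    from vector_derivative_within_cbox[OF _ _ this] that show ?thesis by simp
  qed
  have pw: "1 / chi (seg g x y u) * vector_derivative (seg g x y) (at u within {0..1}) = a * (y - x)"
    if "u \<in> {0..1}" for u
  proof -
    have "chi (seg g x y u) \<noteq> 0" unfolding seg_def by (rule nz)
    then show ?thesis unfolding vd[OF that] by (simp add: field_simps)
  qed
  have cst: "((\<lambda>u. a * (y - x)) has_integral a * (y - x)) {0..1::real}"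
    using has_integral_const_real[of "a * (y - x)" 0 1] by simp
  have "((\<lambda>u. 1 / chi (seg g x y u) * vector_derivative (seg g x y) (at u within {0..1})) has_integral a * (y - x)) {0..1}"
    by (rule has_integral_eq[OF _ cst]) (rule pw[symmetric], assumption)
  then show ?thesis unfolding has_contour_integral_def by simp
qed

lemma seg_start: "pathstart (seg g x y) = g x" and seg_finish: "pathfinish (seg g x y) = g y"
  unfolding seg_def pathstart_def pathfinish_def by auto

lemma seg_image: "x \<le> y \<Longrightarrow> path_image (seg g x y) = g ` {x..y}"
proof -
  assume xy: "x \<le> y"
  have "(\<lambda>u. x + u * (y - x)) ` {0..1} = {x..y}"
  proof
    show "(\<lambda>u. x + u * (y - x)) ` {0..1} \<subseteq> {x..y}"
    proof
      fix t assume "t \<in> (\<lambda>u. x + u * (y - x)) ` {0..1}"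
      then obtain u where u: "u \<in> {0..1}" "t = x + u * (y - x)" by auto
      have "0 \<le> u * (y - x)" using u xy by simp
      moreover have "u * (y - x) \<le> 1 * (y - x)" using u xy by (intro mult_right_mono) auto
      ultimately show "t \<in> {x..y}" using u by simp
    qed
    show "{x..y} \<subseteq> (\<lambda>u. x + u * (y - x)) ` {0..1}"
    proof
      fix t assume t: "t \<in> {x..y}"
      show "t \<in> (\<lambda>u. x + u * (y - x)) ` {0..1}"
      proof (cases "x = y")
        case True then show ?thesis using t by (auto intro!: image_eqI[of _ _ 0])
      next
        case False
        then have "y - x > 0" using xy by simp
        then have "t = x + (t - x) / (y - x) * (y - x)" "0 \<le> (t - x) / (y - x)" "(t - x) / (y - x) \<le> 1"
          using t by (auto simp: field_simps)
        then show ?thesis by (intro image_eqI[of _ _ "(t - x) / (y - x)"]) auto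
      qed
    qed
  qed
  moreover have "seg g x y = g \<circ> (\<lambda>u. x + u * (y - x))" by (auto simp: seg_def fun_eq_iff)
  ultimately show ?thesis unfolding path_image_def by (simp only: image_comp[symmetric])
qed

lemma conn_outside:
  assumes "connected C" "C \<inter> K = {}" "\<not> bounded C"
  shows "C \<subseteq> outside K"
proof
  fix z assume z: "z \<in> C"
  have "C \<subseteq> connected_component_set (- K) z"
    using assms z by (intro connected_component_maximal) auto
  then have "\<not> bounded (connected_component_set (- K) z)" using assms(3) bounded_subset by blast
  then show "z \<in> outside K" by (simp add: outside)
qed

lemma conn_inside:
  assumes "connected C" "C \<inter> K = {}" "x \<in> C" "x \<in> inside K"
  shows "C \<subseteq> inside K"
proof
  fix z assume z: "z \<in> C"
  have "C \<subseteq> connected_component_set (- K) x"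
    using assms z by (intro connected_component_maximal) auto
  then show "z \<in> inside K" using inside_same_component[of K x z] assms z by auto
qed

lemma conn_in_or_out:
  fixes K :: "complex set"
  assumes "connected C" "C \<inter> K = {}" "closed K"
  shows "C \<subseteq> inside K \<or> C \<subseteq> outside K"
proof -
  have "C \<subseteq> inside K \<union> outside K" using assms(2) by auto
  then have "inside K \<inter> C = {} \<or> outside K \<inter> C = {}"
    using connectedD[OF assms(1) open_inside[OF assms(3)] open_outside[OF assms(3)]] by auto
  then show ?thesis using \<open>C \<subseteq> inside K \<union> outside K\<close> by blast
qed

lemma inside_sub_jordan:
  fixes J :: "real \<Rightarrow> complex"
  assumes J: "simple_path J" "pathfinish J = pathstart J"
    and K: "closed K" "K \<subseteq> inside (path_image J) \<union> path_image J"
  shows "inside K \<subseteq> inside (path_image J)"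
proof -
  note JJ = Jordan_inside_outside[OF J]
  have "outside (path_image J) \<inter> K = {}"
    using K(2) inside_Int_outside[of "path_image J"] outside_no_overlap[of "path_image J"] by blast
  then have "outside (path_image J) \<subseteq> outside K"
    using JJ by (intro conn_outside) auto
  then have "inside K \<inter> outside (path_image J) = {}" using inside_Int_outside by blast
  then have sub: "inside K \<subseteq> inside (path_image J) \<union> path_image J"
    using JJ by blast
  show ?thesis
  proof
    fix z assume z: "z \<in> inside K"
    show "z \<in> inside (path_image J)"
    proof (rule ccontr)
      assume "z \<notin> inside (path_image J)"
      then have "z \<in> path_image J" using sub z by blast
      then have "z \<in> closure (outside (path_image J))" using JJ
        by (metis closure_Un_frontier UnI2)
      moreover have "open (inside K)" using K(1) open_inside by blast
      ultimately have "inside K \<inter> closure (outside (path_image J)) \<noteq> {}"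
        using z by blast
      then have "inside K \<inter> outside (path_image J) \<noteq> {}"
        using open_Int_closure_eq_empty[OF \<open>open (inside K)\<close>] by blast
      then show False using \<open>inside K \<inter> outside (path_image J) = {}\<close> by blast
    qed
  qed
qed

lemma res_lemma:
  fixes chi :: "complex \<Rightarrow> complex" and J P :: "real \<Rightarrow> complex"
  assumes V: "open V" and hol: "chi holomorphic_on V"
    and \<rho>: "\<rho> > 0" "ball p \<rho> \<subseteq> V" "\<And>z. z \<in> ball p \<rho> \<Longrightarrow> chi z = 0 \<Longrightarrow> z = p"
    and J: "simple_path J" "pathfinish J = pathstart J"
    and AV: "inside (path_image J) \<union> path_image J \<subseteq> V"
    and Az: "\<And>z. z \<in> inside (path_image J) \<union> path_image J \<Longrightarrow> chi z = 0 \<Longrightarrow> z = p"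
    and P: "valid_path P" "pathfinish P = pathstart P"
      "path_image P \<subseteq> inside (path_image J) \<union> path_image J" "p \<notin> path_image P"
  shows "contour_integral P (\<lambda>w. 1 / chi w) = 2 * pi * \<i> * (winding_number P p * residue (\<lambda>w. 1 / chi w) p)"
proof -
  define A where "A = inside (path_image J) \<union> path_image J"
  define S0 where "S0 = (V \<inter> chi -` (- {0})) \<union> ball p \<rho>"
  have "open S0" unfolding S0_def
    using V hol by (intro open_Un continuous_open_preimage holomorphic_on_imp_continuous_on) auto
  have AS0: "A \<subseteq> S0"
  proof
    fix z assume z: "z \<in> A"
    show "z \<in> S0"
    proof (cases "chi z = 0")
      case True
      then have "z = p" using Az z unfolding A_def by blast
      then show ?thesis unfolding S0_def using \<rho>(1) by auto
    next
      case False
      then show ?thesis using AV z unfolding S0_def A_def by auto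
    qed
  qed
  note JJ = Jordan_inside_outside[OF J]
  obtain x0 where x0: "x0 \<in> A" using JJ unfolding A_def by blast
  have "connected A" unfolding A_def
    using connected_with_inside[of "path_image J"] J
    by (simp add: Un_commute closed_simple_path_image connected_simple_path_image)
  define S where "S = connected_component_set S0 x0"
  have "open S" unfolding S_def using \<open>open S0\<close> open_connected_component by blast
  have "connected S" unfolding S_def by simp
  have AS: "A \<subseteq> S" unfolding S_def using AS0 x0 \<open>connected A\<close> connected_component_maximal by blast
  have SS0: "S \<subseteq> S0" unfolding S_def using connected_component_subset by blast
  have SV: "S \<subseteq> V" using SS0 \<rho> unfolding S0_def by auto
  have "(\<lambda>w. 1 / chi w) holomorphic_on S - {p}"
  proof (intro holomorphic_intros)
    show "chi holomorphic_on S - {p}" using hol SV holomorphic_on_subset by blast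
    fix z assume "z \<in> S - {p}"
    then show "chi z \<noteq> 0" using SS0 \<rho>(3) unfolding S0_def by auto
  qed
  moreover have "path_image P \<subseteq> S - {p}" using P AS unfolding A_def by auto
  moreover have "\<forall>z. z \<notin> S \<longrightarrow> winding_number P z = 0"
  proof (intro allI impI)
    fix z assume that: "z \<notin> S"
    show "winding_number P z = 0"
  proof -
    have "z \<notin> A" using AS that by blast
    then have "z \<in> outside (path_image J)" using JJ unfolding A_def by blast
    moreover have "outside (path_image J) \<inter> A = {}"
      unfolding A_def using inside_Int_outside[of "path_image J"] outside_no_overlap[of "path_image J"] by blast
    then have "outside (path_image J) \<subseteq> outside A"
      using JJ by (intro conn_outside) auto
    moreover have "outside A \<subseteq> outside (path_image P)" using P(3) outside_mono unfolding A_def by blast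
    ultimately show "winding_number P z = 0" using winding_number_zero_in_outside P valid_path_imp_path by blast
  qed
  qed
  ultimately have "contour_integral P (\<lambda>w. 1 / chi w) = 2 * pi * \<i> * (\<Sum>q\<in>{p}. winding_number P q * residue (\<lambda>w. 1 / chi w) q)"
    by (rule Residue_theorem[OF \<open>open S\<close> \<open>connected S\<close> finite.insertI[OF finite.emptyI] _ P(1) P(2)])
  then show ?thesis by simp
qed

lemma excursion:
  fixes g :: "real \<Rightarrow> complex"
  assumes cont: "continuous_on UNIV g" and D: "open D" "frontier D \<subseteq> K"
    and lohi: "lo < t" "t < hi" "g lo \<notin> D" "g hi \<notin> D" "g t \<in> D"
  shows "\<exists>a b. a < b \<and> g a \<in> K \<and> g b \<in> K \<and> g ` {a..b} \<subseteq> D \<union> K"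
proof -
  define A1 where "A1 = {lo..t} \<inter> g -` (- D)"
  define A2 where "A2 = {t..hi} \<inter> g -` (- D)"
  have cl: "closed A1" "closed A2" unfolding A1_def A2_def using cont D
    by (auto intro!: closed_Int closed_vimage simp: closed_Compl)
  have ne: "lo \<in> A1" "hi \<in> A2" unfolding A1_def A2_def using lohi by auto
  define a where "a = Sup A1"
  define b where "b = Inf A2"
  have bdd: "bdd_above A1" "bdd_below A2" unfolding A1_def A2_def by auto
  have aA: "a \<in> A1" unfolding a_def using closed_contains_Sup[OF _ bdd(1) cl(1)] ne by auto
  have bA: "b \<in> A2" unfolding b_def using closed_contains_Inf[OF _ bdd(2) cl(2)] ne by auto
  have at: "a < t" using aA lohi unfolding A1_def by (cases "a = t") auto
  have tb: "t < b" using bA lohi unfolding A2_def by (cases "b = t") auto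
  have inD: "g s \<in> D" if "a < s" "s < b" for s
  proof (rule ccontr)
    assume "g s \<notin> D"
    show False
    proof (cases "s \<le> t")
      case True
      then have "s \<in> A1" using that aA \<open>g s \<notin> D\<close> unfolding A1_def by auto
      then have "s \<le> a" unfolding a_def using bdd by (simp add: cSup_upper)
      then show False using that by simp
    next
      case False
      then have "s \<in> A2" using that bA \<open>g s \<notin> D\<close> unfolding A2_def by auto
      then have "b \<le> s" unfolding b_def using bdd by (simp add: cInf_lower)
      then show False using that by simp
    qed
  qed
  have "g ` {a<..<b} \<subseteq> closure D" using inD closure_subset by fastforce
  then have clos: "g ` {a..b} \<subseteq> closure D"
    using image_closure_subset[of "{a<..<b}" g "closure D"] cont at tb
    by (auto intro: continuous_on_subset)
  have "g a \<notin> D" "g b \<notin> D" using aA bA unfolding A1_def A2_def by auto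
  moreover have "closure D = D \<union> frontier D" using D(1) by (simp add: closure_Un_frontier)
  moreover have "g a \<in> g ` {a..b}" "g b \<in> g ` {a..b}" using at tb by auto
  ultimately have "g a \<in> K" "g b \<in> K" using clos D(2) by blast+
  moreover have "g ` {a..b} \<subseteq> D \<union> K" using clos D(2) \<open>closure D = D \<union> frontier D\<close> by auto
  ultimately show ?thesis using at tb by (intro exI[of _ a] exI[of _ b]) auto
qed

lemma G_along:
  fixes chi G :: "complex \<Rightarrow> complex"
  assumes B0: "open B0" and Gd: "\<And>x. x \<in> B0 \<Longrightarrow> (G has_field_derivative 1 / chi x) (at x)"
    and s: "is_solution (\<lambda>z. a * chi z) V UNIV g" and nz: "\<And>t. chi (g t) \<noteq> 0"
    and inB: "\<And>e. e \<in> {-\<epsilon>..\<epsilon>} \<Longrightarrow> g (t + e) \<in> B0" and e: "e \<in> {-\<epsilon>..\<epsilon>}"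
  shows "G (g (t + e)) = G (g t) + a * e"
proof -
  define \<phi> where "\<phi> e = G (g (t + e)) - a * e" for e :: real
  have "(\<phi> has_vector_derivative 0) (at x within {-\<epsilon>..\<epsilon>})" if x: "x \<in> {-\<epsilon>..\<epsilon>}" for x
  proof -
    have d1: "((\<lambda>e. g (t + e)) has_vector_derivative a * chi (g (t + x))) (at x)"
      using sol_at(1)[OF sol_shift[OF s, of t], of x] by (simp add: add.commute)
    have "((G \<circ> (\<lambda>e. g (t + e))) has_vector_derivative (a * chi (g (t + x)) * (1 / chi (g (t + x))))) (at x)"
      by (rule field_vector_diff_chain_at[OF d1 Gd[OF inB[OF x]]])
    then have "((G \<circ> (\<lambda>e. g (t + e))) has_vector_derivative a) (at x)" using nz[of "t + x"] by simp
    moreover have "((\<lambda>e. a * complex_of_real e) has_vector_derivative a) (at x)"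
    proof -
      have "((\<lambda>e. complex_of_real e) has_vector_derivative complex_of_real 1) (at x)"
        by (intro has_vector_derivative_of_real) (auto intro!: derivative_eq_intros)
      from has_vector_derivative_mult_right[OF this, of a] show ?thesis by simp
    qed
    ultimately have "(\<phi> has_vector_derivative a - a) (at x)" unfolding \<phi>_def o_def
      by (intro has_vector_derivative_diff) auto
    then show ?thesis by (simp add: has_vector_derivative_at_within)
  qed
  then obtain c where c: "\<And>x. x \<in> {-\<epsilon>..\<epsilon>} \<Longrightarrow> \<phi> x = c"
    using has_vector_derivative_zero_constant[of "{-\<epsilon>..\<epsilon>}" \<phi>] by auto
  have "0 \<in> {-\<epsilon>..\<epsilon>}" using e by auto
  then have "\<phi> e = \<phi> 0" using c e by metis
  then show ?thesis unfolding \<phi>_def by (simp add: algebra_simps)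
qed

lemma convex_halfplane_ball:
  "convex {w \<in> ball c r. Im ((w - c) / a) > 0}" "convex {w \<in> ball c r. Im ((w - c) / a) < 0}"
proof -
  have key: "Im (((u *\<^sub>R x + v *\<^sub>R y) - c) / a) = u * Im ((x - c) / a) + v * Im ((y - c) / a)"
    if "u + v = 1" for u v :: real and x y :: complex
  proof -
    have "(u *\<^sub>R x + v *\<^sub>R y) - c = u *\<^sub>R (x - c) + v *\<^sub>R (y - c)"
      using that by (simp add: algebra_simps scaleR_left_distrib[symmetric])
    moreover have "Im (complex_of_real r * w / a) = r * Im (w / a)" for r w
    proof -
      have "Im (complex_of_real r * z) = r * Im z" for z by simp
      from this[of "w / a"] show ?thesis by (simp only: times_divide_eq_right)
    qed
    ultimately show ?thesis by (simp add: scaleR_conv_of_real add_divide_distrib)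
  qed
  have pos: "u * A + v * B > 0" if "u \<ge> 0" "v \<ge> 0" "u + v = 1" "A > 0" "B > 0" for u v A B :: real
  proof -
    have "u * A \<ge> u * min A B" "v * B \<ge> v * min A B" using that by (auto intro: mult_left_mono)
    then have "u * A + v * B \<ge> (u + v) * min A B" by (simp add: algebra_simps)
    then show ?thesis using that by simp
  qed
  have neg: "u * A + v * B < 0" if "u \<ge> 0" "v \<ge> 0" "u + v = 1" "A < 0" "B < 0" for u v A B :: real
    using pos[of u v "-A" "-B"] that by simp
  show "convex {w \<in> ball c r. Im ((w - c) / a) > 0}"
    unfolding convex_def using convex_ball[of c r] unfolding convex_def
    by (auto simp: key pos)
  show "convex {w \<in> ball c r. Im ((w - c) / a) < 0}"
    unfolding convex_def using convex_ball[of c r] unfolding convex_def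
    by (auto simp: key neg)
qed

lemma local_cross:
  fixes chi :: "complex \<Rightarrow> complex"
  assumes V: "open V" and hol: "chi holomorphic_on V"
    and pI: "periodic_solution (\<lambda>z. ai * chi z) V Si gi"
    and pJ: "periodic_solution (\<lambda>z. aj * chi z) V Sj gj"
    and ai1: "cmod ai = 1" and aj1: "cmod aj = 1" and im: "Im (aj / ai) \<noteq> 0"
    and z0: "gi s0 = gj t0"
  shows "\<exists>e. e \<noteq> 0 \<and> \<bar>e\<bar> < Sj \<and> gj (t0 + e) \<in> inside (range gi)"
proof -
  have holI: "(\<lambda>z. ai * chi z) holomorphic_on V" and holJ: "(\<lambda>z. aj * chi z) holomorphic_on V"
    using hol by (auto intro: holomorphic_intros)
  interpret I: persol "\<lambda>z. ai * chi z" V Si gi by unfold_locales (use V holI pI in auto)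
  interpret J: persol "\<lambda>z. aj * chi z" V Sj gj by unfold_locales (use V holJ pJ in auto)
  have nzi: "\<And>t. chi (gi t) \<noteq> 0" using I.nonzero by simp
  have nzj: "\<And>t. chi (gj t) \<noteq> 0" using J.nonzero by simp
  have ai0: "ai \<noteq> 0" using ai1 by auto
  define z0 where "z0 = gi s0"
  have z0V: "z0 \<in> V" using sol_at(2)[OF I.sol] z0_def by auto
  have "open (V \<inter> chi -` (- {0}))"
    using V hol by (intro continuous_open_preimage holomorphic_on_imp_continuous_on) auto
  moreover have "z0 \<in> V \<inter> chi -` (- {0})" using z0V nzi z0_def by auto
  ultimately obtain \<rho>0 where \<rho>0: "\<rho>0 > 0" "ball z0 \<rho>0 \<subseteq> V \<inter> chi -` (- {0})"
    using open_contains_ball by blast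
  define B0 where "B0 = ball z0 \<rho>0"
  have holB0: "(\<lambda>w. 1 / chi w) holomorphic_on B0"
    using \<rho>0 hol unfolding B0_def by (intro holomorphic_intros) (auto intro: holomorphic_on_subset)
  obtain G where G0: "\<And>x. x \<in> B0 \<Longrightarrow> (G has_field_derivative 1 / chi x) (at x within B0)"
    using holomorphic_convex_primitive'[OF _ _ holB0] unfolding B0_def by auto
  have Gd: "\<And>x. x \<in> B0 \<Longrightarrow> (G has_field_derivative 1 / chi x) (at x)"
    using G0 at_within_open[of _ B0] unfolding B0_def by (metis open_ball B0_def)
  have holG: "G holomorphic_on B0"
    unfolding holomorphic_on_def using G0 field_differentiable_def by blast
  have "deriv G z0 = 1 / chi z0" using Gd[of z0] \<rho>0 DERIV_imp_deriv unfolding B0_def by simp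
  then have "deriv G z0 \<noteq> 0" using nzi z0_def by simp
  then obtain \<rho>1 where \<rho>1: "\<rho>1 > 0" "ball z0 \<rho>1 \<subseteq> B0" "inj_on G (ball z0 \<rho>1)"
    using has_complex_derivative_locally_injective[OF holG, of z0] \<rho>0 unfolding B0_def by auto
  define B where "B = ball z0 \<rho>1"
  have contI: "isCont gi s0" and contJ: "isCont gj t0"
    using has_vector_derivative_continuous sol_at(1)[OF I.sol] sol_at(1)[OF J.sol] by blast+
  obtain di where di: "di > 0" "\<And>u. dist u s0 < di \<Longrightarrow> dist (gi u) (gi s0) < \<rho>1"
    using contI \<rho>1(1) unfolding continuous_at_eps_delta by blast
  obtain dj where dj: "dj > 0" "\<And>u. dist u t0 < dj \<Longrightarrow> dist (gj u) (gj t0) < \<rho>1"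
    using contJ \<rho>1(1) unfolding continuous_at_eps_delta by blast
  define \<epsilon>1 where "\<epsilon>1 = min (min (di / 2) (dj / 2)) (Sj / 4)"
  have \<epsilon>1: "\<epsilon>1 > 0" "\<epsilon>1 < Sj" unfolding \<epsilon>1_def using di dj J.Tpos by auto
  have inBi: "gi (s0 + e) \<in> B" if "e \<in> {-\<epsilon>1..\<epsilon>1}" for e
  proof -
    have "dist (s0 + e) s0 < di" using that di unfolding \<epsilon>1_def by (auto simp: dist_real_def)
    from di(2)[OF this] show ?thesis unfolding B_def z0_def by (simp add: dist_commute)
  qed
  have inBj: "gj (t0 + e) \<in> B" if "e \<in> {-\<epsilon>1..\<epsilon>1}" for e
  proof -
    have "dist (t0 + e) t0 < dj" using that dj unfolding \<epsilon>1_def by (auto simp: dist_real_def)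
    from dj(2)[OF this] show ?thesis using z0 unfolding B_def z0_def by (simp add: dist_commute)
  qed
  have BB0: "B \<subseteq> B0" using \<rho>1 B_def by auto
  have oB0: "open B0" unfolding B0_def by simp
  have inBi0: "\<And>e. e \<in> {-\<epsilon>1..\<epsilon>1} \<Longrightarrow> gi (s0 + e) \<in> B0" using inBi BB0 by blast
  have inBj0: "\<And>e. e \<in> {-\<epsilon>1..\<epsilon>1} \<Longrightarrow> gj (t0 + e) \<in> B0" using inBj BB0 by blast
  have Gi: "G (gi (s0 + e)) = G z0 + ai * e" if "e \<in> {-\<epsilon>1..\<epsilon>1}" for e
    using G_along[OF oB0 Gd I.sol nzi inBi0 that] unfolding z0_def .
  have Gj: "G (gj (t0 + e)) = G z0 + aj * e" if "e \<in> {-\<epsilon>1..\<epsilon>1}" for e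
    using G_along[OF oB0 Gd J.sol nzj inBj0 that] z0 unfolding z0_def by simp
  obtain \<delta> where \<delta>: "\<delta> > 0" "\<And>u. norm (gi u - z0) < \<delta> \<Longrightarrow> \<exists>m::int. \<bar>u - s0 - m * Si\<bar> \<le> \<epsilon>1"
    using I.near[OF \<epsilon>1(1), of s0] unfolding z0_def by blast
  define Bs where "Bs = ball z0 (min \<rho>1 \<delta>)"
  have BsB: "Bs \<subseteq> B" unfolding Bs_def B_def by auto
  have injBs: "inj_on G Bs" using \<rho>1(3) BsB inj_on_subset unfolding B_def by blast
  have holBs: "G holomorphic_on Bs" using holG BsB BB0 holomorphic_on_subset by blast
  have oGBs: "open (G ` Bs)" using open_mapping_thm3[OF holBs _ injBs] Bs_def by simp
  obtain H where H: "H holomorphic_on G ` Bs" "\<And>z. z \<in> Bs \<Longrightarrow> H (G z) = z"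
  proof -
    have "open Bs" unfolding Bs_def by simp
    from holomorphic_has_inverse[OF holBs this injBs] show ?thesis using that by metis
  qed
  have z0Bs: "z0 \<in> Bs" unfolding Bs_def using \<rho>1 \<delta> by simp
  obtain \<eta>0 where \<eta>0: "\<eta>0 > 0" "ball (G z0) \<eta>0 \<subseteq> G ` Bs"
    using oGBs z0Bs open_contains_ball by blast
  define \<eta> where "\<eta> = min \<eta>0 \<epsilon>1"
  have \<eta>: "\<eta> > 0" "\<eta> \<le> \<epsilon>1" "ball (G z0) \<eta> \<subseteq> G ` Bs" using \<eta>0 \<epsilon>1 unfolding \<eta>_def by auto
  define \<Delta> where "\<Delta> = ball (G z0) \<eta>"
  define Q where "Q = {z \<in> Bs. G z \<in> \<Delta>}"
  define \<psi> where "\<psi> z = Im ((G z - G z0) / ai)" for z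
  have Qg: "\<psi> z = 0" if zz: "z \<in> Q" "z \<in> range gi" for z
  proof -
    obtain u where u: "z = gi u" using zz by auto
    have "norm (gi u - z0) < \<delta>" using zz u unfolding Q_def Bs_def by (auto simp: dist_norm norm_minus_commute)
    then obtain m :: int where m: "\<bar>u - s0 - m * Si\<bar> \<le> \<epsilon>1" using \<delta> by blast
    define e where "e = u - s0 - m * Si"
    have "gi u = gi (s0 + e + m * Si)" unfolding e_def by simp
    also have "\<dots> = gi (s0 + e)" by (rule I.per_int)
    finally have gue: "gi u = gi (s0 + e)" .
    have "e \<in> {-\<epsilon>1..\<epsilon>1}" using m unfolding e_def by auto
    from Gi[OF this] have "G z = G z0 + ai * e" using u gue by simp
    then show ?thesis unfolding \<psi>_def using ai0 by simp
  qed
  have Qn: "z \<in> range gi" if zz: "z \<in> Q" "\<psi> z = 0" for z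
  proof -
    define w where "w = (G z - G z0) / ai"
    have "Im w = 0" using zz unfolding w_def \<psi>_def by simp
    then have w: "w = complex_of_real (Re w)" by (simp add: complex_eq_iff)
    have "norm w = norm (G z - G z0)" unfolding w_def using ai1 by (simp add: norm_divide)
    also have "\<dots> < \<eta>" using zz unfolding Q_def \<Delta>_def by (simp add: dist_norm norm_minus_commute)
    finally have "\<bar>Re w\<bar> < \<eta>" using w by (metis norm_of_real)
    then have e: "Re w \<in> {-\<epsilon>1..\<epsilon>1}" using \<eta> by auto
    have "G (gi (s0 + Re w)) = G z0 + ai * Re w" by (rule Gi[OF e])
    also have "\<dots> = G z"
    proof -
      have rw: "complex_of_real (Re w) = w" by (simp add: complex_eq_iff \<open>Im w = 0\<close>)
      have "ai * w = G z - G z0" unfolding w_def using ai0 by simp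
      then have "ai * complex_of_real (Re w) = G z - G z0" by (simp only: rw)
      then show ?thesis by simp
    qed
    finally have "gi (s0 + Re w) = z"
      using \<rho>1(3) inBi[OF e] zz BsB unfolding Q_def B_def by (auto dest: inj_onD)
    then show ?thesis by (metis rangeI)
  qed
  define Qp where "Qp = {z \<in> Q. \<psi> z > 0}"
  define Qm where "Qm = {z \<in> Q. \<psi> z < 0}"
  define \<Delta>p where "\<Delta>p = {w \<in> ball (G z0) \<eta>. Im ((w - G z0) / ai) > 0}"
  define \<Delta>m where "\<Delta>m = {w \<in> ball (G z0) \<eta>. Im ((w - G z0) / ai) < 0}"
  have HQ: "Qp = H ` \<Delta>p" "Qm = H ` \<Delta>m"
  proof -
    have *: "{z \<in> Q. P (\<psi> z)} = H ` {w \<in> ball (G z0) \<eta>. P (Im ((w - G z0) / ai))}" for P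
    proof
      show "{z \<in> Q. P (\<psi> z)} \<subseteq> H ` {w \<in> ball (G z0) \<eta>. P (Im ((w - G z0) / ai))}"
      proof
        fix z assume "z \<in> {z \<in> Q. P (\<psi> z)}"
        then have "z \<in> Bs" "G z \<in> ball (G z0) \<eta>" "P (Im ((G z - G z0) / ai))"
          unfolding Q_def \<Delta>_def \<psi>_def by auto
        then show "z \<in> H ` {w \<in> ball (G z0) \<eta>. P (Im ((w - G z0) / ai))}"
          using H(2) by (intro image_eqI[of _ _ "G z"]) auto
      qed
      show "H ` {w \<in> ball (G z0) \<eta>. P (Im ((w - G z0) / ai))} \<subseteq> {z \<in> Q. P (\<psi> z)}"
      proof
        fix z assume "z \<in> H ` {w \<in> ball (G z0) \<eta>. P (Im ((w - G z0) / ai))}"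
        then obtain w where w: "w \<in> ball (G z0) \<eta>" "P (Im ((w - G z0) / ai))" "z = H w" by auto
        then obtain y where y: "y \<in> Bs" "w = G y" using \<eta>(3) by auto
        then have "z = y" using w H(2) by simp
        then show "z \<in> {z \<in> Q. P (\<psi> z)}" using y w unfolding Q_def \<Delta>_def \<psi>_def by auto
      qed
    qed
    show "Qp = H ` \<Delta>p" unfolding Qp_def \<Delta>p_def by (rule *)
    show "Qm = H ` \<Delta>m" unfolding Qm_def \<Delta>m_def by (rule *)
  qed
  have contH: "continuous_on (ball (G z0) \<eta>) H"
    using H(1) \<eta>(3) holomorphic_on_imp_continuous_on holomorphic_on_subset by blast
  have "connected \<Delta>p" "connected \<Delta>m" unfolding \<Delta>p_def \<Delta>m_def
    using convex_halfplane_ball[of "G z0" \<eta> ai] convex_connected by blast+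
  moreover have "continuous_on \<Delta>p H" "continuous_on \<Delta>m H"
    using contH unfolding \<Delta>p_def \<Delta>m_def by (auto intro: continuous_on_subset)
  ultimately have connQ: "connected Qp" "connected Qm" unfolding HQ
    using connected_continuous_image by blast+
  have disj: "Qp \<inter> range gi = {}" "Qm \<inter> range gi = {}" using Qg unfolding Qp_def Qm_def by force+
  note JJ = Jordan_inside_outside[OF I.loop_simple I.loop_closed, unfolded I.loop_image]
  have "z0 \<in> closure (inside (range gi))"
    using JJ z0_def closure_Un_frontier by fastforce
  moreover have "open Q"
  proof -
    have "continuous_on Bs G" using holBs holomorphic_on_imp_continuous_on by blast
    then show ?thesis unfolding Q_def \<Delta>_def Bs_def
      using continuous_open_preimage[of "ball z0 (min \<rho>1 \<delta>)" G "ball (G z0) \<eta>"]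
      by (simp add: vimage_def Int_def)
  qed
  moreover have "z0 \<in> Q" unfolding Q_def \<Delta>_def using z0Bs \<eta> by simp
  ultimately have "Q \<inter> closure (inside (range gi)) \<noteq> {}" by blast
  then obtain y where y: "y \<in> Q" "y \<in> inside (range gi)"
    using open_Int_closure_eq_empty[OF \<open>open Q\<close>] by blast
  have "y \<notin> range gi" using y(2) inside_no_overlap by blast
  then have "\<psi> y \<noteq> 0" using Qn y(1) by blast
  then have side: "Qp \<subseteq> inside (range gi) \<or> Qm \<subseteq> inside (range gi)"
    using conn_inside[OF connQ(1) disj(1), of y] conn_inside[OF connQ(2) disj(2), of y] y
    unfolding Qp_def Qm_def by (cases "\<psi> y > 0") auto
  have gjQ: "gj (t0 + e) \<in> Q \<and> \<psi> (gj (t0 + e)) = e * Im (aj / ai)"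
    if "\<bar>e\<bar> < \<eta>" for e
  proof -
    have e: "e \<in> {-\<epsilon>1..\<epsilon>1}" using that \<eta> by auto
    have "G (gj (t0 + e)) = G z0 + aj * e" by (rule Gj[OF e])
    moreover have "norm (aj * e) < \<eta>" using aj1 that by (simp add: norm_mult)
    ultimately have GD: "G (gj (t0 + e)) \<in> ball (G z0) \<eta>" by (simp add: dist_norm)
    then obtain y where y: "y \<in> Bs" "G y = G (gj (t0 + e))" using \<eta>(3) by force
    then have "y = gj (t0 + e)" using \<rho>1(3) inBj[OF e] BsB unfolding B_def by (auto dest: inj_onD)
    then have "gj (t0 + e) \<in> Q" using y GD unfolding Q_def \<Delta>_def by auto
    moreover have "\<psi> (gj (t0 + e)) = e * Im (aj / ai)"
    proof -
      have eq: "(G (gj (t0 + e)) - G z0) / ai = complex_of_real e * (aj / ai)"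
        using Gj[OF e] by simp
      have im: "Im (complex_of_real e * z) = e * Im z" for z by simp
      show ?thesis by (simp only: \<psi>_def eq im)
    qed
    ultimately show ?thesis by blast
  qed
  define e0 where "e0 = min \<eta> \<epsilon>1 / 2"
  have e0: "e0 > 0" "e0 < \<eta>" "e0 < Sj" using \<eta> \<epsilon>1 unfolding e0_def by auto
  define s where "s = sgn (Im (aj / ai))"
  have s: "\<bar>s\<bar> = 1" "s * Im (aj / ai) > 0" using im unfolding s_def by (auto simp: sgn_real_def)
  have p: "gj (t0 + e0 * s) \<in> Qp" and m: "gj (t0 + (- e0 * s)) \<in> Qm"
  proof -
    have "\<bar>e0 * s\<bar> < \<eta>" "\<bar>- e0 * s\<bar> < \<eta>" using e0 s by (auto simp: abs_mult)
    moreover have "e0 * s * Im (aj / ai) > 0" "- e0 * s * Im (aj / ai) < 0"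
      using e0 s by (simp_all add: mult.assoc)
    ultimately show "gj (t0 + e0 * s) \<in> Qp" "gj (t0 + (- e0 * s)) \<in> Qm"
      using gjQ[of "e0 * s"] gjQ[of "- e0 * s"] unfolding Qp_def Qm_def by simp_all
  qed
  have "\<bar>e0 * s\<bar> < Sj" "\<bar>- e0 * s\<bar> < Sj" "e0 * s \<noteq> 0" "- e0 * s \<noteq> 0" using e0 s by (auto simp: abs_mult)
  then show ?thesis using side p m by blast
qed

lemma side:
  fixes chi :: "complex \<Rightarrow> complex"
  assumes V: "open V" and hol: "chi holomorphic_on V" and UV: "U \<subseteq> V"
    and pU: "p \<in> U" and chip: "chi p = 0" and dp: "deriv chi p \<noteq> 0"
    and cdef: "c = residue (\<lambda>w. 1 / chi w) p"
    and can: "canonical_nbhd (\<lambda>z. rot_coeff c * chi z) V U p (2 * pi * cmod c) W"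
    and ct: "closed_trajectory (\<lambda>z. rot_coeff c * chi z) V \<gamma>"
    and gW: "\<gamma> \<subseteq> closure W"
  shows "\<exists>g S. periodic_solution (\<lambda>z. rot_coeff c * chi z) V S g \<and> \<gamma> = range g"
    and "cmod (rot_coeff c) = 1"
    and "2 * pi * \<i> * c = rot_coeff c * (2 * pi * cmod c)"
    and "\<And>z. z \<in> W \<Longrightarrow> chi z = 0 \<Longrightarrow> z = p"
    and "inside \<gamma> \<subseteq> W"
    and "p \<in> inside \<gamma>"
    and "\<And>P. valid_path P \<Longrightarrow> pathfinish P = pathstart P \<Longrightarrow> path_image P \<subseteq> inside \<gamma> \<union> \<gamma>
           \<Longrightarrow> p \<notin> path_image P
           \<Longrightarrow> contour_integral P (\<lambda>w. 1 / chi w) = 2 * pi * \<i> * (winding_number P p * c)"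
proof -
  define a where "a = rot_coeff c"
  define T where "T = 2 * pi * cmod c"
  have holF: "(\<lambda>z. a * chi z) holomorphic_on V" using hol by (auto intro: holomorphic_intros)
  obtain g S where gS: "periodic_solution (\<lambda>z. a * chi z) V S g" "\<gamma> = range g"
    using ct unfolding closed_trajectory_def a_def by blast
  then show "\<exists>g S. periodic_solution (\<lambda>z. rot_coeff c * chi z) V S g \<and> \<gamma> = range g"
    unfolding a_def by blast
  interpret I: persol "\<lambda>z. a * chi z" V S g by unfold_locales (use V holF gS in auto)
  have nz: "\<And>t. chi (g t) \<noteq> 0" and a0: "a \<noteq> 0" using I.nonzero by auto
  then have c0: "c \<noteq> 0" unfolding a_def rot_coeff_def by auto
  show a1: "cmod (rot_coeff c) = 1" using c0 unfolding rot_coeff_def by (simp add: norm_divide norm_mult)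
  show aT: "2 * pi * \<i> * c = rot_coeff c * (2 * pi * cmod c)"
    using c0 unfolding rot_coeff_def by (simp add: field_simps)
  have pn: "periodic_nbhd (\<lambda>z. a * chi z) V U p T W" using can unfolding canonical_nbhd_def a_def T_def by auto
  then obtain J where J: "simple_path J" "pathfinish J = pathstart J" "W = inside (path_image J)"
    unfolding periodic_nbhd_def jordan_domain_def by blast
  have WU: "W \<subseteq> U" using pn unfolding periodic_nbhd_def by auto
  show zW: "\<And>z. z \<in> W \<Longrightarrow> chi z = 0 \<Longrightarrow> z = p"
  proof (rule ccontr)
    fix z assume z: "z \<in> W" "chi z = 0" "z \<noteq> p"
    then obtain h where h: "h 0 = z" "periodic_solution (\<lambda>z. a * chi z) V T h"
      using pn unfolding periodic_nbhd_def by blast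
    interpret H: persol "\<lambda>z. a * chi z" V T h by unfold_locales (use V holF h in auto)
    show False using H.nonzero[of 0] h z by simp
  qed
  note JJ = Jordan_inside_outside[OF J(1,2)]
  have clW: "closure W = inside (path_image J) \<union> path_image J"
    using JJ J(3) by (simp add: closure_Un_frontier)
  have gam: "\<gamma> = path_image I.loop" using I.loop_image gS by simp
  have clg: "closed \<gamma>" unfolding gam using I.loop_simple closed_simple_path_image by blast
  show iW: "inside \<gamma> \<subseteq> W"
    using inside_sub_jordan[OF J(1,2) clg] gW clW J(3) by simp
  obtain \<rho> where \<rho>: "\<rho> > 0" "ball p \<rho> \<subseteq> V" "inj_on chi (ball p \<rho>)"
    using has_complex_derivative_locally_injective[OF hol, of p] dp pU UV V by auto
  have \<rho>z: "\<And>z. z \<in> ball p \<rho> \<Longrightarrow> chi z = 0 \<Longrightarrow> z = p"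
    using \<rho> chip by (metis centre_in_ball inj_onD)
  have AV: "inside \<gamma> \<union> \<gamma> \<subseteq> V" using iW WU UV gS sol_at(2)[OF I.sol] by auto
  have Az: "\<And>z. z \<in> inside \<gamma> \<union> \<gamma> \<Longrightarrow> chi z = 0 \<Longrightarrow> z = p"
    using iW zW nz gS by auto
  show res: "\<And>P. valid_path P \<Longrightarrow> pathfinish P = pathstart P \<Longrightarrow> path_image P \<subseteq> inside \<gamma> \<union> \<gamma>
           \<Longrightarrow> p \<notin> path_image P
           \<Longrightarrow> contour_integral P (\<lambda>w. 1 / chi w) = 2 * pi * \<i> * (winding_number P p * c)"
    using res_lemma[OF V hol \<rho>(1,2) \<rho>z I.loop_simple I.loop_closed] AV Az unfolding gam[symmetric] cdef
    by blast
  show "p \<in> inside \<gamma>"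
  proof (rule ccontr)
    assume pin: "p \<notin> inside \<gamma>"
    define P where "P = seg g 0 S"
    have vP: "valid_path P" unfolding P_def by (rule seg_valid[OF I.sol V holF])
    have cP: "pathfinish P = pathstart P" unfolding P_def seg_start seg_finish using I.per[of 0] by simp
    have iP: "path_image P \<subseteq> \<gamma>" unfolding P_def path_image_def seg_def gS by auto
    have pg: "p \<notin> \<gamma>" using nz chip gS by auto
    then have "p \<notin> path_image P" using iP by blast
    from res[OF vP cP _ this] iP have "contour_integral P (\<lambda>w. 1 / chi w) = 2 * pi * \<i> * (winding_number P p * c)"
      by blast
    moreover have "p \<in> outside \<gamma>" using pin pg by (metis ComplI Un_iff inside_Un_outside)
    then have "p \<in> outside (path_image P)" using outside_mono[OF iP] by blast
    then have "winding_number P p = 0"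
      using winding_number_zero_in_outside valid_path_imp_path[OF vP] cP by blast
    moreover have "contour_integral P (\<lambda>w. 1 / chi w) = a * (complex_of_real S - complex_of_real 0)"
      unfolding P_def by (rule contour_integral_unique[OF seg_integral[OF I.sol nz]])
    ultimately have "a * S = 0" by simp
    then show False using a0 I.Tpos by simp
  qed
qed

lemma range_shift: "range (\<lambda>u. g (u + s)) = range (g :: real \<Rightarrow> 'a)"
proof
  show "range (\<lambda>u. g (u + s)) \<subseteq> range g" by auto
  show "range g \<subseteq> range (\<lambda>u. g (u + s))"
  proof
    fix z assume "z \<in> range g"
    then obtain x where "z = g x" by auto
    then show "z \<in> range (\<lambda>u. g (u + s))" by (intro image_eqI[of _ _ "x - s"]) auto
  qed
qed

lemma range_refl: "range (\<lambda>u. g (s - u)) = range (g :: real \<Rightarrow> 'a)"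
proof
  show "range (\<lambda>u. g (s - u)) \<subseteq> range g" by auto
  show "range g \<subseteq> range (\<lambda>u. g (s - u))"
  proof
    fix z assume "z \<in> range g"
    then obtain x where "z = g x" by auto
    then show "z \<in> range (\<lambda>u. g (s - u))" by (intro image_eqI[of _ _ "s - x"]) auto
  qed
qed

theorem lemma2p2:
  fixes U V :: "complex set" and c :: "real \<Rightarrow> complex" and chi :: "complex \<Rightarrow> complex"
    and p\<^sub>i p\<^sub>j :: complex and W\<^sub>i W\<^sub>j \<gamma>\<^sub>i \<gamma>\<^sub>j :: "complex set"
  assumes "smooth_jordan_curve c" and "U = inside (path_image c)"
    and "open V" and "closure U \<subseteq> V" and "chi holomorphic_on V"
    and "\<forall>z \<in> frontier U. chi z \<noteq> 0"
    and "\<forall>z \<in> U. chi z = 0 \<longrightarrow> deriv chi z \<noteq> 0"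
    and "p\<^sub>i \<in> U" and "chi p\<^sub>i = 0" and "p\<^sub>j \<in> U" and "chi p\<^sub>j = 0" and "p\<^sub>i \<noteq> p\<^sub>j"
    and "canonical_nbhd (\<lambda>z. rot_coeff (residue (\<lambda>w. 1 / chi w) p\<^sub>i) * chi z) V U p\<^sub>i
           (2 * pi * cmod (residue (\<lambda>w. 1 / chi w) p\<^sub>i)) W\<^sub>i"
    and "canonical_nbhd (\<lambda>z. rot_coeff (residue (\<lambda>w. 1 / chi w) p\<^sub>j) * chi z) V U p\<^sub>j
           (2 * pi * cmod (residue (\<lambda>w. 1 / chi w) p\<^sub>j)) W\<^sub>j"
    and "closed_trajectory (\<lambda>z. rot_coeff (residue (\<lambda>w. 1 / chi w) p\<^sub>i) * chi z) V \<gamma>\<^sub>i"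
    and "\<gamma>\<^sub>i \<subseteq> closure W\<^sub>i"
    and "closed_trajectory (\<lambda>z. rot_coeff (residue (\<lambda>w. 1 / chi w) p\<^sub>j) * chi z) V \<gamma>\<^sub>j"
    and "\<gamma>\<^sub>j \<subseteq> closure W\<^sub>j"
  shows "\<gamma>\<^sub>i \<inter> \<gamma>\<^sub>j = {}"
proof (rule ccontr)
  define ci where "ci = residue (\<lambda>w. 1 / chi w) p\<^sub>i"
  define cj where "cj = residue (\<lambda>w. 1 / chi w) p\<^sub>j"
  define ai where "ai = rot_coeff ci"
  define aj where "aj = rot_coeff cj"
  define Ti where "Ti = 2 * pi * cmod ci"
  have V: "open V" and hol: "chi holomorphic_on V" using assms by auto
  have UV: "U \<subseteq> V" using assms(4) closure_subset by blast
  have dpi: "deriv chi p\<^sub>i \<noteq> 0" and dpj: "deriv chi p\<^sub>j \<noteq> 0" using assms(7,8,9,10,11) by auto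
  note SI = side[OF V hol UV assms(8,9) dpi ci_def assms(13)[folded ci_def] assms(15)[folded ci_def] assms(16)]
  note SJ = side[OF V hol UV assms(10,11) dpj cj_def assms(14)[folded cj_def] assms(17)[folded cj_def] assms(18)]
  obtain gi Si where gi: "periodic_solution (\<lambda>z. ai * chi z) V Si gi" "\<gamma>\<^sub>i = range gi"
    using SI(1) unfolding ai_def by blast
  obtain gj Sj where gj: "periodic_solution (\<lambda>z. aj * chi z) V Sj gj" "\<gamma>\<^sub>j = range gj"
    using SJ(1) unfolding aj_def by blast
  have holI: "(\<lambda>z. ai * chi z) holomorphic_on V" and holJ: "(\<lambda>z. aj * chi z) holomorphic_on V"
    using hol by (auto intro: holomorphic_intros)
  interpret I: persol "\<lambda>z. ai * chi z" V Si gi by unfold_locales (use V holI gi in auto)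
  interpret J: persol "\<lambda>z. aj * chi z" V Sj gj by unfold_locales (use V holJ gj in auto)
  have nzi: "\<And>t. chi (gi t) \<noteq> 0" using I.nonzero by simp
  have nzj: "\<And>t. chi (gj t) \<noteq> 0" using J.nonzero by simp
  have ai1: "cmod ai = 1" and aj1: "cmod aj = 1" using SI(2) SJ(2) ai_def aj_def by auto
  have ai0: "ai \<noteq> 0" using ai1 by auto
  assume "\<gamma>\<^sub>i \<inter> \<gamma>\<^sub>j \<noteq> {}"
  then obtain s0 t0 where z0: "gi s0 = gj t0" using gi gj by auto
  show False
  proof (cases "Im (aj / ai) = 0")
    case True
    define r where "r = aj / ai"
    have "cmod r = 1" unfolding r_def using ai1 aj1 by (simp add: norm_divide)
    moreover have r: "r = complex_of_real (Re r)" using True unfolding r_def by (simp add: complex_eq_iff)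
    ultimately have "\<bar>Re r\<bar> = 1" by (metis norm_of_real)
    then have "Re r = 1 \<or> Re r = -1" by auto
    then have "aj = ai \<or> aj = - ai" using r ai0 unfolding r_def by (auto simp: field_simps)
    then have same: "range gi = range gj"
    proof
      assume "aj = ai"
      then have sJ: "is_solution (\<lambda>z. ai * chi z) V UNIV gj" using J.sol by simp
      have "(\<lambda>u. gi (u + s0)) = (\<lambda>u. gj (u + t0))"
        by (rule sol_unique[OF V holI sol_shift[OF I.sol] sol_shift[OF sJ], of 0]) (simp add: z0)
      then have "range (\<lambda>u. gi (u + s0)) = range (\<lambda>u. gj (u + t0))" by (rule arg_cong)
      then show ?thesis by (simp only: range_shift)
    next
      assume "aj = - ai"
      then have "(\<lambda>z. - (aj * chi z)) = (\<lambda>z. ai * chi z)" by simp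
      then have sJ: "is_solution (\<lambda>z. ai * chi z) V UNIV (\<lambda>u. gj (t0 - u))"
        using sol_reflect[OF J.sol, of t0] by simp
      have "(\<lambda>u. gi (u + s0)) = (\<lambda>u. gj (t0 - u))"
        by (rule sol_unique[OF V holI sol_shift[OF I.sol] sJ, of 0]) (simp add: z0)
      then have "range (\<lambda>u. gi (u + s0)) = range (\<lambda>u. gj (t0 - u))" by (rule arg_cong)
      then show ?thesis by (simp only: range_shift range_refl)
    qed
    have "p\<^sub>i \<in> inside \<gamma>\<^sub>j" using SI(6) gi gj same by simp
    then have "p\<^sub>i \<in> W\<^sub>j" using SJ(5) by blast
    then have "p\<^sub>i = p\<^sub>j" using SJ(4) assms(9) by blast
    then show False using assms(12) by simp
  next
    case False
    obtain e where e: "e \<noteq> 0" "\<bar>e\<bar> < Sj" "gj (t0 + e) \<in> inside (range gi)"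
      using local_cross[OF V hol gi(1) gj(1) ai1 aj1 False z0] by blast
    define D where "D = inside (range gi)"
    have clg: "closed (range gi)" using I.loop_image I.loop_simple closed_simple_path_image by metis
    have oD: "open D" unfolding D_def using clg open_inside by blast
    have fD: "frontier D \<subseteq> range gi" unfolding D_def using clg frontier_inside_subset by blast
    have z0D: "gj t0 \<notin> D"
    proof
      assume "gj t0 \<in> D"
      moreover have "gj t0 \<in> range gi" using z0 by (metis rangeI)
      ultimately show False using inside_no_overlap[of "range gi"] unfolding D_def by blast
    qed
    obtain lo hi where lohi: "lo < t0 + e" "t0 + e < hi" "gj lo \<notin> D" "gj hi \<notin> D"
    proof (cases "e > 0")
      case True
      then show ?thesis using that[of t0 "t0 + Sj"] e z0D J.per[of t0] by auto
    next
      case False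
      then have "e < 0" using e by simp
      moreover have "gj (t0 - Sj) = gj t0" using J.per[of "t0 - Sj"] by simp
      ultimately show ?thesis using that[of "t0 - Sj" t0] e z0D by auto
    qed
    obtain a b where ab: "a < b" "gj a \<in> range gi" "gj b \<in> range gi" "gj ` {a..b} \<subseteq> D \<union> range gi"
      using excursion[OF sol_cont[OF J.sol] oD fD lohi(1,2,3,4)] e(3) unfolding D_def by blast
    obtain s1 s2 where s12: "gi s1 = gj b" "gi s2 = gj a" using ab by (metis imageE)
    define P where "P = seg gj a b +++ seg gi s1 s2"
    have v1: "valid_path (seg gj a b)" by (rule seg_valid[OF J.sol V holJ])
    have v2: "valid_path (seg gi s1 s2)" by (rule seg_valid[OF I.sol V holI])
    have m: "pathfinish (seg gj a b) = pathstart (seg gi s1 s2)" unfolding seg_start seg_finish using s12 by simp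
    have vP: "valid_path P" unfolding P_def using v1 v2 m by (rule valid_path_join)
    have cP: "pathfinish P = pathstart P" unfolding P_def using s12 by (simp add: seg_start seg_finish)
    have iP: "path_image P \<subseteq> inside \<gamma>\<^sub>i \<union> \<gamma>\<^sub>i"
    proof -
      have "path_image (seg gj a b) = gj ` {a..b}" using ab by (simp add: seg_image)
      moreover have "path_image (seg gi s1 s2) \<subseteq> range gi" unfolding path_image_def seg_def by auto
      ultimately show ?thesis unfolding P_def path_image_join[OF m] using ab gi unfolding D_def by auto
    qed
    have pP: "p\<^sub>i \<notin> path_image P"
    proof -
      have "path_image (seg gj a b) \<subseteq> range gj" "path_image (seg gi s1 s2) \<subseteq> range gi"
        unfolding path_image_def seg_def by auto
      then have "path_image P \<subseteq> range gi \<union> range gj"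
        unfolding P_def path_image_join[OF m] by blast
      then show ?thesis using nzi nzj assms(9) by auto
    qed
    have "((\<lambda>w. 1 / chi w) has_contour_integral (aj * (complex_of_real b - complex_of_real a) + ai * (complex_of_real s2 - complex_of_real s1))) P"
      unfolding P_def
      by (rule has_contour_integral_join[OF seg_integral[OF J.sol nzj] seg_integral[OF I.sol nzi] v1 v2])
    then have int: "contour_integral P (\<lambda>w. 1 / chi w) = aj * (complex_of_real b - complex_of_real a) + ai * (complex_of_real s2 - complex_of_real s1)"
      by (rule contour_integral_unique)
    have "contour_integral P (\<lambda>w. 1 / chi w) = 2 * pi * \<i> * (winding_number P p\<^sub>i * ci)"
      using SI(7)[OF vP cP iP pP] ci_def by simp
    also have "\<dots> = winding_number P p\<^sub>i * (ai * Ti)"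
      using SI(3) unfolding ai_def Ti_def ci_def by (simp add: algebra_simps)
    finally have eq: "aj * (b - a) + ai * (s2 - s1) = winding_number P p\<^sub>i * (ai * Ti)" using int by simp
    obtain k :: int where k: "winding_number P p\<^sub>i = of_int k"
      using integer_winding_number[OF valid_path_imp_path[OF vP] cP pP] Ints_cases by metis
    have "aj / ai * complex_of_real (b - a) = of_real (k * Ti - (s2 - s1))"
    proof -
      have "aj * (b - a) = ai * (of_int k * Ti - (s2 - s1))" using eq k by (simp add: algebra_simps)
      then show ?thesis using ai0 by (simp add: field_simps)
    qed
    then have "Im (aj / ai * complex_of_real (b - a)) = 0" by (metis Im_complex_of_real)
    moreover have im: "Im (z * complex_of_real r) = Im z * r" for z r by simp
    ultimately have "Im (aj / ai) * (b - a) = 0" by (simp only: im)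
    then show False using False ab(1) by simp
  qed
qed

end
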